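(* In the setting below, for every nonempty $A\subseteq[n]$: $\Pr_{\psi\sim\Psi}(E_1(\psi)\wedge\neg E_2(\psi))\le 2^{-6}$.
   Context: $[N]:=\{0,\dots,N-1\}$. Fix integers $n\ge1$ and real $0<\varepsilon<1$. Let $b:=2^{\lceil\log_2(9\cdot 2^{23}\varepsilon^{-2})\rceil}$ and $k:=\lceil\tfrac{15}{2}\ln b+16\rceil$. Hash families: for $d\ge1$, identify $[2^d]$ with $\mathrm{GF}(2^d)$ via binary representation. For $k'\ge1$, $N\le 2^d$, $c\le d$, $\mathcal H_{k'}([N],[2^c])$ is the uniform distribution over tuples $(a_0,\dots,a_{k'-1})\in\mathrm{GF}(2^d)^{k'}$, each giving $x\mapsto(\sum_ia_ix^i)\bmod 2^c$ on $[N]$; $\mathcal G_{k'}([N])$ is uniform over the same tuples giving $x\mapsto\mathrm{tz}(\sum_ia_ix^i)$, $\mathrm{tz}(y)$ = number of trailing zeros of the $d$-bit representation of $y$ ($\mathrm{tz}(0)=d$). Here $d$ is a fixed integer with $2^d\ge N$, $d\ge c$. $\Psi:=\mathcal G_2([n])\times\mathcal H_2([n],[2^5b^2])\times\mathcal H_k([2^5b^2],[b])$ with the uniform product distribution; $\psi=(f,g,h)$. For fixed nonempty $A\subseteq[n]$: $t(f):=\max_{a\in A}f(a)-\log_2b+9$; $s(f):=\max(0,t(f))$; $R(f):=\{a\in A: f(a)\ge s(f)\}$. Events: $E_1(\psi)$: $2^{-16}b\le 2^{-t(f)}|A|\le 2^{-1}b$; $E_2(\psi)$: $\big||R(f)|-2^{-s(f)}|A|\big|\le\frac{\varepsilon}{3}2^{-s(f)}|A|$.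 *)

theory Defs
  imports "HOL-Probability.Probability" "HOL-Library.Z2" "HOL-Computational_Algebra.Polynomial"
begin

text \<open>An element x of [2^d] is identified with the polynomial over GF(2) whose
  i-th coefficient is the i-th bit of x; GF(2^d) = GF(2)[X]/(P) for an irreducible
  polynomial P of degree d (the modulus P is a parameter, universally quantified).\<close>

definition gf_enc :: "nat \<Rightarrow> nat \<Rightarrow> bit poly" where
  "gf_enc d x = Poly (map (\<lambda>i. if Bit_Operations.bit x i then (1::bit) else 0) [0..<d])"

definition gf_dec :: "nat \<Rightarrow> bit poly \<Rightarrow> nat" where
  "gf_dec d p = (\<Sum>i<d. if coeff p i = 1 then 2 ^ i else 0)"

definition gf_eval :: "bit poly \<Rightarrow> nat \<Rightarrow> nat list \<Rightarrow> nat \<Rightarrow> nat" where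
  "gf_eval P d as x =
     gf_dec d ((\<Sum>i<length as. gf_enc d (as ! i) * gf_enc d x ^ i) mod P)"

definition tz :: "nat \<Rightarrow> nat \<Rightarrow> nat" where
  "tz d y = (if y = 0 then d else (LEAST i. Bit_Operations.bit y i))"

definition coeff_tuples :: "nat \<Rightarrow> nat \<Rightarrow> nat list pmf" where
  "coeff_tuples d k' = pmf_of_set {as. length as = k' \<and> set as \<subseteq> {..<2 ^ d}}"

text \<open>H_{k'}([N],[2^c]) (functions only relevant on [N]).\<close>
definition hash_H :: "bit poly \<Rightarrow> nat \<Rightarrow> nat \<Rightarrow> nat \<Rightarrow> (nat \<Rightarrow> nat) pmf" where
  "hash_H P d k' c = map_pmf (\<lambda>as x. gf_eval P d as x mod 2 ^ c) (coeff_tuples d k')"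

definition hash_G :: "bit poly \<Rightarrow> nat \<Rightarrow> nat \<Rightarrow> (nat \<Rightarrow> nat) pmf" where
  "hash_G P d k' = map_pmf (\<lambda>as x. tz d (gf_eval P d as x)) (coeff_tuples d k')"

definition log_b :: "real \<Rightarrow> nat" where
  "log_b \<epsilon> = nat \<lceil>log 2 (9 * 2 ^ 23 / \<epsilon>\<^sup>2)\<rceil>"

definition b_param :: "real \<Rightarrow> nat" where
  "b_param \<epsilon> = 2 ^ log_b \<epsilon>"

definition k_param :: "real \<Rightarrow> nat" where
  "k_param \<epsilon> = nat \<lceil>15 / 2 * ln (real (b_param \<epsilon>)) + 16\<rceil>"

definition t_of :: "real \<Rightarrow> nat set \<Rightarrow> (nat \<Rightarrow> nat) \<Rightarrow> int" where
  "t_of \<epsilon> A f = int (Max (f ` A)) - int (log_b \<epsilon>) + 9"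

definition s_of :: "real \<Rightarrow> nat set \<Rightarrow> (nat \<Rightarrow> nat) \<Rightarrow> int" where
  "s_of \<epsilon> A f = max 0 (t_of \<epsilon> A f)"

definition R_of :: "real \<Rightarrow> nat set \<Rightarrow> (nat \<Rightarrow> nat) \<Rightarrow> nat set" where
  "R_of \<epsilon> A f = {a \<in> A. int (f a) \<ge> s_of \<epsilon> A f}"

definition E1 :: "real \<Rightarrow> nat set \<Rightarrow> (nat \<Rightarrow> nat) \<times> (nat \<Rightarrow> nat) \<times> (nat \<Rightarrow> nat) \<Rightarrow> bool" where
  "E1 \<epsilon> A \<psi> = (let f = fst \<psi>; b = real (b_param \<epsilon>) in
     2 powi (-16) * b \<le> 2 powi (- t_of \<epsilon> A f) * real (card A)
     \<and> 2 powi (- t_of \<epsilon> A f) * real (card A) \<le> 2 powi (-1) * b)"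

definition E2 :: "real \<Rightarrow> nat set \<Rightarrow> (nat \<Rightarrow> nat) \<times> (nat \<Rightarrow> nat) \<times> (nat \<Rightarrow> nat) \<Rightarrow> bool" where
  "E2 \<epsilon> A \<psi> = (let f = fst \<psi> in
     \<bar>real (card (R_of \<epsilon> A f)) - 2 powi (- s_of \<epsilon> A f) * real (card A)\<bar>
       \<le> \<epsilon> / 3 * (2 powi (- s_of \<epsilon> A f) * real (card A)))"

end

theory Submission
  imports Defs "HOL-Computational_Algebra.Polynomial_Factorial"
begin

lemma enc_coeff: "coeff (gf_enc d x) i = (if i < d \<and> Bit_Operations.bit x i then 1 else 0)"
  by (auto simp: gf_enc_def nth_default_def)

lemma enc_deg: "d \<ge> 1 \<Longrightarrow> degree (gf_enc d x) < d"
proof -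
  assume "d \<ge> 1"
  have "degree (gf_enc d x) \<le> d - 1"
    by (rule degree_le) (auto simp: enc_coeff)
  thus ?thesis using \<open>d \<ge> 1\<close> by linarith
qed

lemma dec_horner: "gf_dec d p = horner_sum of_bool 2 (map (\<lambda>i. coeff p i = 1) [0..<d])"
  unfolding gf_dec_def horner_sum_eq_sum
  by (auto simp: atLeast0LessThan of_bool_def intro!: sum.cong)

lemma dec_bit: "Bit_Operations.bit (gf_dec d p) i \<longleftrightarrow> i < d \<and> coeff p i = 1"
  unfolding dec_horner by (auto simp: bit_horner_sum_bit_iff)

lemma dec_less: "gf_dec d p < 2 ^ d"
  unfolding dec_horner using horner_sum_of_bool_2_less[of "map (\<lambda>i. coeff p i = 1) [0..<d]"]
  by simp

lemma dec_enc: "x < 2 ^ d \<Longrightarrow> gf_dec d (gf_enc d x) = x"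
proof -
  assume "x < 2 ^ d"
  have "gf_dec d (gf_enc d x) = horner_sum of_bool 2 (map (Bit_Operations.bit x) [0..<d])"
    unfolding dec_horner by (auto simp: enc_coeff intro!: arg_cong[where f="horner_sum of_bool 2"] map_cong)
  also have "\<dots> = take_bit d x" by (rule horner_sum_bit_eq_take_bit)
  also have "\<dots> = x" using \<open>x < 2^d\<close> by (simp add: take_bit_nat_eq_self_iff)
  finally show ?thesis .
qed

lemma dec_inj: 
  assumes "degree p < d" "degree q < d" "gf_dec d p = gf_dec d q"
  shows "p = q"
proof (rule poly_eqI)
  fix i
  show "coeff p i = coeff q i"
  proof (cases "i < d")
    case True
    have "Bit_Operations.bit (gf_dec d p) i = Bit_Operations.bit (gf_dec d q) i" using assms(3) by simp
    hence "(coeff p i = 1) = (coeff q i = 1)" using True by (simp add: dec_bit)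
    thus ?thesis by (cases "coeff p i"; cases "coeff q i") auto
  next
    case False
    thus ?thesis using assms by (simp add: coeff_eq_0)
  qed
qed

lemma irr_deg: "irreducible (P::bit poly) \<Longrightarrow> degree P \<ge> 1"
proof (rule ccontr)
  assume "irreducible P" "\<not> degree P \<ge> 1"
  hence "P \<noteq> 0" "degree P = 0" by auto
  hence "is_unit P" by (simp add: is_unit_iff_degree)
  with \<open>irreducible P\<close> show False by (simp add: irreducible_not_unit)
qed

lemma eval2: "gf_eval P d [a0, a1] x = gf_dec d ((gf_enc d a0 + gf_enc d a1 * gf_enc d x) mod P)"
proof -
  have "(\<Sum>i<length [a0, a1]. gf_enc d ([a0, a1] ! i) * gf_enc d x ^ i)
      = (\<Sum>i<Suc (Suc 0). gf_enc d ([a0, a1] ! i) * gf_enc d x ^ i)" by simp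
  also have "\<dots> = gf_enc d a0 + gf_enc d a1 * gf_enc d x"
    by (simp only: sum.lessThan_Suc lessThan_0 sum.empty) simp
  finally show ?thesis unfolding gf_eval_def by simp
qed

lemma small_dvd: "(P::bit poly) dvd q \<Longrightarrow> degree q < degree P \<Longrightarrow> q = 0"
  by (metis dvd_imp_degree_le leD)

lemma deg_mod: "irreducible (P::bit poly) \<Longrightarrow> degree (q mod P) < degree P"
proof -
  assume "irreducible P"
  hence "P \<noteq> 0" "degree P \<ge> 1" using irr_deg by auto
  show ?thesis
  proof (cases "q mod P = 0")
    case True thus ?thesis using \<open>degree P \<ge> 1\<close> by simp
  next
    case False thus ?thesis using degree_mod_less[of P q] \<open>P \<noteq> 0\<close> by blast
  qed
qed

lemma enc_inj: "a < 2^d \<Longrightarrow> b < 2^d \<Longrightarrow> gf_enc d a = gf_enc d b \<Longrightarrow> a = b"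
  by (metis dec_enc)

lemma pair_inj:
  assumes P: "irreducible P" "degree P = d"
    and xz: "x < 2^d" "z < 2^d" "x \<noteq> z"
    and a: "a0 < 2^d" "a1 < 2^d" and b: "b0 < 2^d" "b1 < 2^d"
    and e1: "gf_eval P d [a0, a1] x = gf_eval P d [b0, b1] x"
    and e2: "gf_eval P d [a0, a1] z = gf_eval P d [b0, b1] z"
  shows "a0 = b0 \<and> a1 = b1"
proof -
  define E where "E = gf_enc d"
  have d1: "d \<ge> 1" using irr_deg P by auto
  have degE: "degree (E u) < d" for u unfolding E_def using enc_deg d1 by auto
  have degD: "degree (E u - E v) < d" for u v
    using degree_diff_le_max[of "E u" "E v"] degE[of u] degE[of v] by linarith
  have pr: "prime_elem P" using P(1) by (rule field_poly_irreducible_imp_prime)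
  have r1: "(E a0 + E a1 * E x) mod P = (E b0 + E b1 * E x) mod P"
    using e1 unfolding eval2 E_def by (rule dec_inj[rotated 2]) (use deg_mod P in auto)
  have r2: "(E a0 + E a1 * E z) mod P = (E b0 + E b1 * E z) mod P"
    using e2 unfolding eval2 E_def by (rule dec_inj[rotated 2]) (use deg_mod P in auto)
  have h1: "P dvd (E a0 + E a1 * E x) - (E b0 + E b1 * E x)" using r1 by (simp only: mod_eq_dvd_iff)
  have h2: "P dvd (E a0 + E a1 * E z) - (E b0 + E b1 * E z)" using r2 by (simp only: mod_eq_dvd_iff)
  have "P dvd ((E a0 + E a1 * E x) - (E b0 + E b1 * E x)) - ((E a0 + E a1 * E z) - (E b0 + E b1 * E z))"
    using h1 h2 by (rule dvd_diff)
  also have "((E a0 + E a1 * E x) - (E b0 + E b1 * E x)) - ((E a0 + E a1 * E z) - (E b0 + E b1 * E z))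
     = (E a1 - E b1) * (E x - E z)" by (simp only: algebra_simps)
  finally have "P dvd (E a1 - E b1) \<or> P dvd (E x - E z)" using pr prime_elem_dvd_mult_iff by blast
  moreover have "E x - E z \<noteq> 0" using enc_inj[OF xz(1,2)] xz(3) unfolding E_def by auto
  ultimately have "E a1 - E b1 = 0" using small_dvd degD P(2) by metis
  hence eq1: "E a1 = E b1" by simp
  have eqd: "(E a0 + E a1 * E x) - (E b0 + E b1 * E x) = E a0 - E b0" using eq1 by (simp only: algebra_simps)
  have "P dvd E a0 - E b0" using h1 unfolding eqd .
  hence "E a0 - E b0 = 0" using small_dvd degD P(2) by metis
  hence "E a0 = E b0" by simp
  thus ?thesis using eq1 enc_inj[OF a(1) b(1)] enc_inj[OF a(2) b(2)] unfolding E_def by blast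
qed

definition TT :: "nat \<Rightarrow> nat list set" where
  "TT d = {as. length as = 2 \<and> set as \<subseteq> {..<2 ^ d}}"

lemma TT_elem: "as \<in> TT d \<Longrightarrow> as = [as!0, as!1] \<and> as!0 < 2^d \<and> as!1 < 2^d"
proof -
  assume "as \<in> TT d"
  hence l: "length as = 2" and s: "set as \<subseteq> {..<2^d}" by (auto simp: TT_def)
  then obtain u v where "as = [u, v]"
    by (metis (no_types) length_0_conv length_Suc_conv numeral_2_eq_2)
  thus ?thesis using s by auto
qed

lemma TT_card: "card (TT d) = 2 ^ d * 2 ^ d"
proof -
  have "TT d = {xs. set xs \<subseteq> {..<2^d} \<and> length xs = 2}" by (auto simp: TT_def)
  thus ?thesis by (simp add: card_lists_length_eq power2_eq_square)
qed

lemma TT_finite: "finite (TT d)"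
proof -
  have "TT d = {xs. set xs \<subseteq> {..<2^d} \<and> length xs = 2}" by (auto simp: TT_def)
  thus ?thesis by (simp add: finite_lists_length_eq)
qed

lemma eval_less: "gf_eval P d as x < 2 ^ d"
  unfolding gf_eval_def by (rule dec_less)

lemma pair_bij:
  assumes P: "irreducible P" "degree P = d"
    and xz: "x < 2^d" "z < 2^d" "x \<noteq> z"
  shows "bij_betw (\<lambda>as. (gf_eval P d as x, gf_eval P d as z)) (TT d) ({..<2^d} \<times> {..<2^d})"
proof -
  let ?F = "\<lambda>as. (gf_eval P d as x, gf_eval P d as z)"
  have inj: "inj_on ?F (TT d)"
  proof (rule inj_onI)
    fix as bs assume a: "as \<in> TT d" and b: "bs \<in> TT d" and e: "?F as = ?F bs"
    from TT_elem[OF a] TT_elem[OF b] have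
      A: "as = [as!0, as!1]" "as!0 < 2^d" "as!1 < 2^d" and
      B: "bs = [bs!0, bs!1]" "bs!0 < 2^d" "bs!1 < 2^d" by auto
    have e1: "gf_eval P d [as!0, as!1] x = gf_eval P d [bs!0, bs!1] x"
      using e A(1) B(1) by (metis prod.inject)
    have e2: "gf_eval P d [as!0, as!1] z = gf_eval P d [bs!0, bs!1] z"
      using e A(1) B(1) by (metis prod.inject)
    from pair_inj[OF P xz A(2,3) B(2,3) e1 e2] show "as = bs" using A(1) B(1) by metis
  qed
  have sub: "?F ` TT d \<subseteq> {..<2^d} \<times> {..<2^d}" using eval_less by auto
  have "card (?F ` TT d) = card ({..<2^d::nat} \<times> {..<2^d::nat})"
    using card_image[OF inj] TT_card by (simp add: card_cartesian_product)
  hence "?F ` TT d = {..<2^d} \<times> {..<2^d}"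
    using sub by (intro card_subset_eq) auto
  thus ?thesis using inj by (simp add: bij_betw_def)
qed

lemma bij_count:
  assumes "bij_betw F T U" "finite T"
  shows "card {t\<in>T. Q (F t)} = card {u\<in>U. Q u}"
proof -
  have "bij_betw F {t\<in>T. Q (F t)} {u\<in>U. Q u}"
    using assms(1) unfolding bij_betw_def inj_on_def by auto
  thus ?thesis by (rule bij_betw_same_card)
qed

lemma tz_bits: "y \<noteq> 0 \<Longrightarrow> tz d y = (LEAST i. Bit_Operations.bit y i)"
  by (simp add: tz_def)

lemma ex_bit: "(y::nat) \<noteq> 0 \<Longrightarrow> \<exists>i. Bit_Operations.bit y i"
  using bit_eq_iff[of y 0] by auto

lemma tz_le: "y < 2^d \<Longrightarrow> tz d y \<le> d"
proof (cases "y = 0")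
  case True thus ?thesis by (simp add: tz_def)
next
  case False
  assume "y < 2^d"
  obtain i where i: "Bit_Operations.bit y i" using ex_bit[OF False] by blast
  have "i < d"
  proof (rule ccontr)
    assume "\<not> i < d"
    hence "y < 2 ^ i" using \<open>y < 2^d\<close> by (meson dual_order.strict_trans2 not_less one_le_numeral power_increasing)
    thus False using i by (simp add: bit_iff_odd div_less)
  qed
  thus ?thesis using i False by (simp add: tz_def) (meson Least_le order.trans less_imp_le)
qed

lemma dvd_bits: "(2::nat) ^ s dvd y \<longleftrightarrow> (\<forall>i<s. \<not> Bit_Operations.bit y i)"
proof -
  have "2 ^ s dvd y \<longleftrightarrow> take_bit s y = 0" by (simp add: take_bit_eq_0_iff)
  also have "\<dots> \<longleftrightarrow> (\<forall>i<s. \<not> Bit_Operations.bit y i)"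
    by (auto simp: bit_eq_iff bit_take_bit_iff)
  finally show ?thesis .
qed

lemma tz_ge: "y < 2^d \<Longrightarrow> s \<le> d \<Longrightarrow> (s \<le> tz d y \<longleftrightarrow> 2 ^ s dvd y)"
proof (cases "y = 0")
  case True thus "s \<le> d \<Longrightarrow> ?thesis" by (simp add: tz_def)
next
  case False
  obtain j where j: "Bit_Operations.bit y j" using ex_bit[OF False] by blast
  have "s \<le> (LEAST i. Bit_Operations.bit y i) \<longleftrightarrow> (\<forall>i<s. \<not> Bit_Operations.bit y i)"
  proof
    assume "s \<le> (LEAST i. Bit_Operations.bit y i)"
    thus "\<forall>i<s. \<not> Bit_Operations.bit y i" using Least_le[of "Bit_Operations.bit y"] by fastforce
  next
    assume h: "\<forall>i<s. \<not> Bit_Operations.bit y i"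
    have "Bit_Operations.bit y (LEAST i. Bit_Operations.bit y i)" using j by (rule LeastI)
    thus "s \<le> (LEAST i. Bit_Operations.bit y i)" using h not_less by blast
  qed
  thus ?thesis using False by (simp add: tz_def dvd_bits)
qed

lemma card_mult: "s \<le> d \<Longrightarrow> card {u\<in>{..<2^d::nat}. 2 ^ s dvd u} = 2 ^ (d - s)"
proof -
  assume sd: "s \<le> d"
  have pd: "(2::nat)^d = 2^(d-s) * 2^s" using sd by (simp flip: power_add)
  have "{u\<in>{..<2^d::nat}. 2 ^ s dvd u} = (\<lambda>k. k * 2^s) ` {..<2^(d-s)}"
  proof (intro set_eqI iffI)
    fix u :: nat assume "u \<in> {u\<in>{..<2^d::nat}. 2 ^ s dvd u}"
    then obtain k where "u = k * 2^s" "u < 2^d" by (auto elim!: dvdE simp: mult.commute)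
    hence "k < 2^(d-s)" using pd by auto
    thus "u \<in> (\<lambda>k. k * 2^s) ` {..<2^(d-s)}" using \<open>u = k * 2^s\<close> by auto
  next
    fix u :: nat assume "u \<in> (\<lambda>k. k * 2^s) ` {..<2^(d-s)}"
    then obtain k where "u = k * 2^s" "k < 2^(d-s)" by auto
    thus "u \<in> {u\<in>{..<2^d::nat}. 2 ^ s dvd u}" using pd by auto
  qed
  moreover have "inj_on (\<lambda>k::nat. k * 2^s) {..<2^(d-s)}" by (auto intro: inj_onI)
  ultimately show ?thesis by (simp add: card_image)
qed

lemma count_pair:
  assumes P: "irreducible P" "degree P = d"
    and xz: "x < 2^d" "z < 2^d" "x \<noteq> z" and sd: "s \<le> d"
  shows "card {as\<in>TT d. s \<le> tz d (gf_eval P d as x) \<and> s \<le> tz d (gf_eval P d as z)} = 2^(d-s) * 2^(d-s)"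
proof -
  have "card {as\<in>TT d. s \<le> tz d (gf_eval P d as x) \<and> s \<le> tz d (gf_eval P d as z)}
     = card {w\<in>{..<2^d} \<times> {..<2^d}. s \<le> tz d (fst w) \<and> s \<le> tz d (snd w)}"
    using bij_count[OF pair_bij[OF P xz] TT_finite, where Q="\<lambda>w. s \<le> tz d (fst w) \<and> s \<le> tz d (snd w)"]
    by simp
  also have "{w\<in>{..<2^d} \<times> {..<2^d}. s \<le> tz d (fst w) \<and> s \<le> tz d (snd w)}
     = {u\<in>{..<2^d::nat}. 2 ^ s dvd u} \<times> {u\<in>{..<2^d::nat}. 2 ^ s dvd u}"
    using tz_ge[OF _ sd] by auto
  finally show ?thesis using card_mult[OF sd] by (simp add: card_cartesian_product)
qed

lemma count_single:
  assumes P: "irreducible P" "degree P = d"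
    and x: "x < 2^d" and sd: "s \<le> d"
  shows "card {as\<in>TT d. s \<le> tz d (gf_eval P d as x)} = 2^(d-s) * 2^d"
proof -
  have d1: "d \<ge> 1" using irr_deg P by auto
  define z where "z = (if x = 0 then 1 else (0::nat))"
  have "(1::nat) < 2^d" using d1 by (intro one_less_power) auto
  hence z: "z < 2^d" "x \<noteq> z" unfolding z_def by auto
  have "card {as\<in>TT d. s \<le> tz d (gf_eval P d as x)}
     = card {w\<in>{..<2^d::nat} \<times> {..<2^d::nat}. s \<le> tz d (fst w)}"
    using bij_count[OF pair_bij[OF P x z(1) z(2)] TT_finite, where Q="\<lambda>w. s \<le> tz d (fst w)"]
    by simp
  also have "{w\<in>{..<2^d::nat} \<times> {..<2^d::nat}. s \<le> tz d (fst w)}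
     = {u\<in>{..<2^d::nat}. 2 ^ s dvd u} \<times> {..<2^d::nat}"
    using tz_ge[OF _ sd] by auto
  finally show ?thesis using card_mult[OF sd] by (simp add: card_cartesian_product)
qed

lemma cheb_count:
  fixes I :: "'a \<Rightarrow> 't \<Rightarrow> bool" and p \<delta> :: real
  assumes fin: "finite T" "finite A"
    and single: "\<And>a. a\<in>A \<Longrightarrow> real (card {t\<in>T. I a t}) = p * card T"
    and pair: "\<And>a b. a\<in>A \<Longrightarrow> b\<in>A \<Longrightarrow> a\<noteq>b \<Longrightarrow> real (card {t\<in>T. I a t \<and> I b t}) = p^2 * card T"
    and dpos: "\<delta> > 0"
  shows "real (card {t\<in>T. \<delta> \<le> \<bar>real (card {a\<in>A. I a t}) - card A * p\<bar>}) * \<delta>^2 \<le> card A * p * card T"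
proof -
  define i where "i a t = (of_bool (I a t) :: real)" for a t
  define D where "D t = real (card {a\<in>A. I a t}) - card A * p" for t
  have sumi: "(\<Sum>t\<in>T. i a t) = real (card {t\<in>T. I a t})" for a
    using fin(1) unfolding i_def by (simp add: Int_def)
  have sumii: "(\<Sum>t\<in>T. i a t * i b t) = real (card {t\<in>T. I a t \<and> I b t})" for a b
  proof -
    have "(\<Sum>t\<in>T. i a t * i b t) = (\<Sum>t\<in>T. of_bool (I a t \<and> I b t))" unfolding i_def by (intro sum.cong) auto
    thus ?thesis using fin(1) by (simp add: Int_def)
  qed
  have Dsum: "D t = (\<Sum>a\<in>A. i a t - p)" for t
  proof -
    have "(\<Sum>a\<in>A. i a t) = real (card {a\<in>A. I a t})"
      using fin(2) unfolding i_def by (simp add: Int_def)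
    thus ?thesis unfolding D_def by (simp add: sum_subtractf)
  qed
  define c where "c a b = (\<Sum>t\<in>T. (i a t - p) * (i b t - p))" for a b
  have cexp: "c a b = (\<Sum>t\<in>T. i a t * i b t) - p * (\<Sum>t\<in>T. i a t) - p * (\<Sum>t\<in>T. i b t) + p^2 * card T" for a b
  proof -
    have "c a b = (\<Sum>t\<in>T. i a t * i b t - p * i a t - p * i b t + p^2)"
      unfolding c_def by (intro sum.cong) (auto simp: algebra_simps power2_eq_square)
    also have "\<dots> = (\<Sum>t\<in>T. i a t * i b t) - p * (\<Sum>t\<in>T. i a t) - p * (\<Sum>t\<in>T. i b t) + p^2 * card T"
      by (simp only: sum.distrib sum_subtractf sum_distrib_left sum_constant) (simp add: mult.commute)
    finally show ?thesis .
  qed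
  have c0: "c a b = 0" if "a\<in>A" "b\<in>A" "a\<noteq>b" for a b
    unfolding cexp sumii sumi using single pair that by (simp add: power2_eq_square)
  have caa: "c a a \<le> p * card T" if "a\<in>A" for a
  proof -
    have "(\<Sum>t\<in>T. i a t * i a t) = (\<Sum>t\<in>T. i a t)" unfolding i_def by (intro sum.cong) auto
    hence "c a a = p * card T - p^2 * card T" unfolding cexp using single[OF that] sumi by (simp add: power2_eq_square)
    thus ?thesis by (simp add: power2_eq_square)
  qed
  have "(\<Sum>t\<in>T. (D t)^2) = (\<Sum>t\<in>T. \<Sum>a\<in>A. \<Sum>b\<in>A. (i a t - p) * (i b t - p))"
    unfolding Dsum power2_eq_square sum_product by simp
  also have "\<dots> = (\<Sum>a\<in>A. \<Sum>b\<in>A. c a b)"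
  proof -
    have "(\<Sum>t\<in>T. \<Sum>a\<in>A. \<Sum>b\<in>A. (i a t - p) * (i b t - p)) = (\<Sum>a\<in>A. \<Sum>t\<in>T. \<Sum>b\<in>A. (i a t - p) * (i b t - p))"
      by (rule sum.swap)
    also have "\<dots> = (\<Sum>a\<in>A. \<Sum>b\<in>A. \<Sum>t\<in>T. (i a t - p) * (i b t - p))"
      by (intro sum.cong refl sum.swap)
    finally show ?thesis unfolding c_def .
  qed
  also have "\<dots> = (\<Sum>a\<in>A. c a a)"
  proof (rule sum.cong[OF refl])
    fix a assume a: "a \<in> A"
    have "(\<Sum>b\<in>A. c a b) = c a a + (\<Sum>b\<in>A - {a}. c a b)" using fin(2) a by (simp add: sum.remove)
    also have "(\<Sum>b\<in>A - {a}. c a b) = 0" using c0 a by (intro sum.neutral) auto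
    finally show "(\<Sum>b\<in>A. c a b) = c a a" by simp
  qed
  also have "\<dots> \<le> (\<Sum>a\<in>A. p * card T)" using caa by (rule sum_mono)
  also have "\<dots> = card A * p * card T" by simp
  finally have tot: "(\<Sum>t\<in>T. (D t)^2) \<le> card A * p * card T" .
  let ?S = "{t\<in>T. \<delta> \<le> \<bar>D t\<bar>}"
  have "real (card ?S) * \<delta>^2 = (\<Sum>t\<in>?S. \<delta>^2)" by simp
  also have "\<dots> \<le> (\<Sum>t\<in>?S. (D t)^2)"
  proof (rule sum_mono)
    fix t assume "t \<in> ?S"
    hence "\<delta> \<le> \<bar>D t\<bar>" by simp
    hence "\<delta>^2 \<le> \<bar>D t\<bar>^2" using dpos by (intro power_mono) auto
    thus "\<delta>^2 \<le> (D t)^2" by simp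
  qed
  also have "\<dots> \<le> (\<Sum>t\<in>T. (D t)^2)" using fin(1) by (intro sum_mono2) auto
  finally show ?thesis using tot unfolding D_def by simp
qed

lemma geo: "(\<Sum>i<n. (2::nat)^i) + 1 = 2^n"
  by (induction n) auto

lemma sumS:
  fixes S :: "nat set" and b M :: nat
  assumes "finite S" "\<And>s. s \<in> S \<Longrightarrow> b * 2^s \<le> M"
  shows "b * (\<Sum>s\<in>S. 2^s) \<le> 2 * M"
proof (cases "S = {}")
  case True thus ?thesis by simp
next
  case False
  define K where "K = Max S"
  have K: "K \<in> S" using assms(1) False unfolding K_def by simp
  have sub: "S \<subseteq> {..<Suc K}" using assms(1) unfolding K_def by (auto simp: less_Suc_eq_le)
  have "(\<Sum>s\<in>S. (2::nat)^s) \<le> (\<Sum>s<Suc K. 2^s)" using sub by (intro sum_mono2) auto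
  also have "\<dots> \<le> 2 * 2^K" using geo[of "Suc K"] by simp
  finally have "b * (\<Sum>s\<in>S. 2^s) \<le> b * (2 * 2^K)" by simp
  also have "\<dots> = 2 * (b * 2^K)" by simp
  also have "\<dots> \<le> 2 * M" using assms(2)[OF K] by simp
  finally show ?thesis .
qed

lemma params:
  assumes "0 < \<epsilon>" "\<epsilon> < 1"
  shows "log_b \<epsilon> \<ge> 9" "real (b_param \<epsilon>) * \<epsilon>^2 \<ge> 9 * 2^23"
proof -
  define v where "v = 9 * 2 ^ 23 / \<epsilon>\<^sup>2"
  have e2: "0 < \<epsilon>^2" "\<epsilon>^2 < 1" using assms by (auto simp: power_less_one_iff)
  have "9 * 2^23 \<le> v" unfolding v_def using e2 by (simp add: le_divide_eq)
  hence vpos: "v > 0" and v23: "2 powr 23 \<le> v" by auto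
  have "23 \<le> log 2 v" using v23 vpos by (simp add: le_log_iff)
  hence Lge: "log 2 v \<le> real (log_b \<epsilon>)" "log_b \<epsilon> \<ge> 23" unfolding log_b_def v_def[symmetric]
    by (auto simp: le_nat_iff)
  show "log_b \<epsilon> \<ge> 9" using Lge by simp
  have "v = 2 powr (log 2 v)" using vpos by simp
  also have "\<dots> \<le> 2 powr (real (log_b \<epsilon>))" using Lge by simp
  also have "\<dots> = real (b_param \<epsilon>)" unfolding b_param_def by (simp add: powr_realpow)
  finally have "v \<le> real (b_param \<epsilon>)" .
  hence "v * \<epsilon>^2 \<le> real (b_param \<epsilon>) * \<epsilon>^2" using e2 by (intro mult_right_mono) auto
  thus "real (b_param \<epsilon>) * \<epsilon>^2 \<ge> 9 * 2^23" unfolding v_def using e2 by simp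
qed

lemma powi_neg_nat: "(2::real) powi (- int s) = 1 / 2^s"
  by (simp add: power_int_minus power_int_of_nat divide_inverse)

lemma bnd_s:
  fixes \<epsilon> :: real and A :: "nat set"
  assumes P: "irreducible P" "degree P = d" and A: "finite A" "A \<noteq> {}" "\<And>a. a \<in> A \<Longrightarrow> a < 2^d"
    and sd: "s \<le> d" and e: "0 < \<epsilon>"
  shows "real (card {as\<in>TT d. \<epsilon>/3 * (card A * (1/2^s)) \<le>
            \<bar>real (card {a\<in>A. s \<le> tz d (gf_eval P d as a)}) - card A * (1/2^s)\<bar>})
         \<le> 9 * card (TT d) * 2^s / (\<epsilon>^2 * card A)"
proof -
  define p :: real where "p = 1/2^s"
  define \<delta> where "\<delta> = \<epsilon>/3 * (card A * p)"
  have Apos: "real (card A) > 0" using A by (simp add: card_gt_0_iff)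
  have ppos: "p > 0" unfolding p_def by simp
  have dpos: "\<delta> > 0" unfolding \<delta>_def using Apos ppos e by simp
  have pw: "(2::real)^d = 2^(d-s) * 2^s" using sd by (simp flip: power_add)
  have cT: "real (card (TT d)) = 2^d * 2^d" by (simp add: TT_card)
  have single: "real (card {t\<in>TT d. s \<le> tz d (gf_eval P d t a)}) = p * card (TT d)" if "a \<in> A" for a
  proof -
    have "real (card {t\<in>TT d. s \<le> tz d (gf_eval P d t a)}) = 2^(d-s) * 2^d"
      using count_single[OF P A(3)[OF that] sd] by simp
    also have "\<dots> = p * card (TT d)" unfolding cT p_def pw by simp
    finally show ?thesis .
  qed
  have pair: "real (card {t\<in>TT d. s \<le> tz d (gf_eval P d t a) \<and> s \<le> tz d (gf_eval P d t c)}) = p^2 * card (TT d)"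
    if "a \<in> A" "c \<in> A" "a \<noteq> c" for a c
  proof -
    have "real (card {t\<in>TT d. s \<le> tz d (gf_eval P d t a) \<and> s \<le> tz d (gf_eval P d t c)}) = 2^(d-s) * 2^(d-s)"
      using count_pair[OF P A(3)[OF that(1)] A(3)[OF that(2)] that(3) sd] by simp
    also have "\<dots> = p^2 * card (TT d)" unfolding cT p_def pw by (simp add: power2_eq_square)
    finally show ?thesis .
  qed
  have ch: "real (card {t\<in>TT d. \<delta> \<le> \<bar>real (card {a\<in>A. s \<le> tz d (gf_eval P d t a)}) - card A * p\<bar>}) * \<delta>^2
      \<le> card A * p * card (TT d)"
    by (rule cheb_count[OF TT_finite A(1) single pair dpos])
  have "real (card {t\<in>TT d. \<delta> \<le> \<bar>real (card {a\<in>A. s \<le> tz d (gf_eval P d t a)}) - card A * p\<bar>})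
      \<le> card A * p * card (TT d) / \<delta>^2" using ch dpos by (simp add: pos_le_divide_eq)
  also have "\<dots> = 9 * card (TT d) * 2^s / (\<epsilon>^2 * card A)"
    unfolding \<delta>_def p_def using Apos e by (simp add: field_simps power2_eq_square)
  finally show ?thesis unfolding \<delta>_def p_def .
qed

lemma incl_bad:
  fixes \<epsilon> :: real and A :: "nat set" and f :: "nat \<Rightarrow> nat"
  assumes A: "finite A" "A \<noteq> {}" and fle: "\<And>a. a \<in> A \<Longrightarrow> f a \<le> d"
    and e: "0 < \<epsilon>" and L9: "log_b \<epsilon> \<ge> 9"
    and bad: "E1 \<epsilon> A (f, g) \<and> \<not> E2 \<epsilon> A (f, g)"
  shows "\<exists>s. 1 \<le> s \<and> s \<le> d \<and> b_param \<epsilon> * 2^s \<le> 2^16 * card A \<and>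
     \<epsilon>/3 * (card A * (1/2^s)) \<le> \<bar>real (card {a\<in>A. s \<le> f a}) - card A * (1/2^s)\<bar>"
proof -
  define t where "t = t_of \<epsilon> A f"
  have e1: "2 powi (-16) * real (b_param \<epsilon>) \<le> 2 powi (- t) * real (card A)"
    using bad unfolding E1_def t_def Let_def by simp
  have ne2: "\<not> \<bar>real (card (R_of \<epsilon> A f)) - 2 powi (- s_of \<epsilon> A f) * real (card A)\<bar>
       \<le> \<epsilon> / 3 * (2 powi (- s_of \<epsilon> A f) * real (card A))"
    using bad unfolding E2_def Let_def by simp
  show ?thesis
  proof (cases "t \<le> 0")
    case True
    hence s0: "s_of \<epsilon> A f = 0" unfolding s_of_def t_def by simp
    have "R_of \<epsilon> A f = A" unfolding R_of_def s0 by auto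
    thus ?thesis using ne2 s0 e by simp
  next
    case False
    define sn where "sn = nat t"
    have tsn: "t = int sn" "s_of \<epsilon> A f = int sn" using False unfolding sn_def s_of_def t_def by auto
    have "Max (f ` A) \<le> d" using A fle by (simp add: Max_le_iff)
    hence "sn \<le> d" using tsn(1) L9 unfolding t_def t_of_def by linarith
    moreover have "1 \<le> sn" using False tsn by simp
    moreover have "b_param \<epsilon> * 2^sn \<le> 2^16 * card A"
    proof -
      have "real (b_param \<epsilon>) / 2^16 \<le> real (card A) / 2^sn"
        using e1 unfolding tsn(1) powi_neg_nat using powi_neg_nat[of 16] by simp
      hence "real (b_param \<epsilon>) * 2^sn \<le> 2^16 * real (card A)"
        by (simp add: field_simps)
      hence "real (b_param \<epsilon> * 2^sn) \<le> real (2^16 * card A)" by simp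
      thus ?thesis by (simp only: of_nat_le_iff)
    qed
    moreover have "R_of \<epsilon> A f = {a\<in>A. sn \<le> f a}" unfolding R_of_def tsn by auto
    hence "\<epsilon>/3 * (card A * (1/2^sn)) \<le> \<bar>real (card {a\<in>A. sn \<le> f a}) - card A * (1/2^sn)\<bar>"
      using ne2 unfolding tsn(2) powi_neg_nat by (simp add: mult.commute)
    ultimately show ?thesis by blast
  qed
qed

theorem lemma10:
  fixes n :: nat and \<epsilon> :: real and A :: "nat set"
    and d1 d2 d3 :: nat and P1 P2 P3 :: "bit poly"
  assumes "n \<ge> 1" and "0 < \<epsilon>" and "\<epsilon> < 1"
    and "A \<subseteq> {..<n}" and "A \<noteq> {}"
    and "irreducible P1" and "degree P1 = d1" and "2 ^ d1 \<ge> n"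
    and "irreducible P2" and "degree P2 = d2" and "2 ^ d2 \<ge> n"
    and "d2 \<ge> 5 + 2 * log_b \<epsilon>"
    and "irreducible P3" and "degree P3 = d3" and "2 ^ d3 \<ge> 2 ^ 5 * b_param \<epsilon> ^ 2"
    and "d3 \<ge> log_b \<epsilon>"
  shows "measure_pmf.prob
           (pair_pmf (hash_G P1 d1 2)
              (pair_pmf (hash_H P2 d2 2 (5 + 2 * log_b \<epsilon>))
                        (hash_H P3 d3 (k_param \<epsilon>) (log_b \<epsilon>))))
           {\<psi>. E1 \<epsilon> A \<psi> \<and> \<not> E2 \<epsilon> A \<psi>} \<le> 2 powi (-6)"
proof -
  note P1 = assms(6,7)
  define L where "L = log_b \<epsilon>"
  define b where "b = b_param \<epsilon>"
  have L9: "log_b \<epsilon> \<ge> 9" and be: "real (b_param \<epsilon>) * \<epsilon>^2 \<ge> 9 * 2^23"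
    using params assms(2,3) by auto
  have finA: "finite A" using assms(4) finite_subset by blast
  have Aless: "a < 2^d1" if "a \<in> A" for a using that assms(4,8) by auto
  define \<Phi> where "\<Phi> as = (\<lambda>x. tz d1 (gf_eval P1 d1 as x))" for as
  define Bad where "Bad f = (E1 \<epsilon> A (f, undefined) \<and> \<not> E2 \<epsilon> A (f, undefined))" for f
  define T where "T = TT d1"
  have Tfin: "finite T" unfolding T_def by (rule TT_finite)
  have cT: "card T = 2^d1 * 2^d1" unfolding T_def by (rule TT_card)
  hence Tne: "T \<noteq> {}" using Tfin by auto
  have ev: "{\<psi>. E1 \<epsilon> A \<psi> \<and> \<not> E2 \<epsilon> A \<psi>} = fst -` {f. Bad f}"
    by (auto simp: Bad_def E1_def E2_def Let_def)
  have G: "hash_G P1 d1 2 = map_pmf \<Phi> (pmf_of_set T)"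
    unfolding hash_G_def coeff_tuples_def T_def TT_def \<Phi>_def by simp
  let ?Q = "pair_pmf (hash_H P2 d2 2 (5 + 2 * log_b \<epsilon>)) (hash_H P3 d3 (k_param \<epsilon>) (log_b \<epsilon>))"
  have "measure_pmf.prob (pair_pmf (hash_G P1 d1 2) ?Q) {\<psi>. E1 \<epsilon> A \<psi> \<and> \<not> E2 \<epsilon> A \<psi>}
      = measure_pmf.prob (map_pmf fst (pair_pmf (hash_G P1 d1 2) ?Q)) {f. Bad f}"
    unfolding ev by simp
  also have "\<dots> = measure_pmf.prob (pmf_of_set T) (\<Phi> -` {f. Bad f})"
    unfolding map_fst_pair_pmf G by simp
  also have "\<dots> = card (T \<inter> \<Phi> -` {f. Bad f}) / card T"
    by (rule measure_pmf_of_set[OF Tne Tfin])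
  also have "T \<inter> \<Phi> -` {f. Bad f} = {as\<in>T. Bad (\<Phi> as)}" by auto
  finally have red: "measure_pmf.prob (pair_pmf (hash_G P1 d1 2) ?Q) {\<psi>. E1 \<epsilon> A \<psi> \<and> \<not> E2 \<epsilon> A \<psi>}
      = card {as\<in>T. Bad (\<Phi> as)} / card T" .
  define S where "S = {s. 1 \<le> s \<and> s \<le> d1 \<and> b_param \<epsilon> * 2^s \<le> 2^16 * card A}"
  define Set where "Set s = {as\<in>TT d1. \<epsilon>/3 * (card A * (1/2^s)) \<le>
            \<bar>real (card {a\<in>A. s \<le> tz d1 (gf_eval P1 d1 as a)}) - card A * (1/2^s)\<bar>}" for s
  have Sfin: "finite S" unfolding S_def by (rule finite_subset[of _ "{..d1}"]) auto
  have incl: "{as\<in>T. Bad (\<Phi> as)} \<subseteq> (\<Union>s\<in>S. Set s)"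
  proof
    fix as assume as: "as \<in> {as\<in>T. Bad (\<Phi> as)}"
    have fle: "\<Phi> as a \<le> d1" if "a \<in> A" for a unfolding \<Phi>_def using tz_le eval_less by blast
    from incl_bad[where f="\<Phi> as" and g=undefined and d=d1, OF finA assms(5) fle assms(2) L9] as obtain s where
      "1 \<le> s \<and> s \<le> d1 \<and> b_param \<epsilon> * 2^s \<le> 2^16 * card A \<and>
     \<epsilon>/3 * (card A * (1/2^s)) \<le> \<bar>real (card {a\<in>A. s \<le> \<Phi> as a}) - card A * (1/2^s)\<bar>"
      unfolding Bad_def by blast
    thus "as \<in> (\<Union>s\<in>S. Set s)" using as unfolding S_def Set_def \<Phi>_def T_def by auto
  qed
  have Apos: "real (card A) > 0" using finA assms(5) by (simp add: card_gt_0_iff)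
  have "real (card {as\<in>T. Bad (\<Phi> as)}) \<le> real (card (\<Union>s\<in>S. Set s))"
    using incl by (intro of_nat_mono card_mono finite_subset[OF _ TT_finite[of d1]]) (auto simp: Set_def)
  also have "\<dots> \<le> real (\<Sum>s\<in>S. card (Set s))" by (intro of_nat_mono card_UN_le Sfin)
  also have "\<dots> = (\<Sum>s\<in>S. real (card (Set s)))" by simp
  also have "\<dots> \<le> (\<Sum>s\<in>S. 9 * card T * 2^s / (\<epsilon>^2 * card A))"
  proof (rule sum_mono)
    fix s assume "s \<in> S"
    hence sd: "s \<le> d1" unfolding S_def by auto
    show "real (card (Set s)) \<le> 9 * card T * 2^s / (\<epsilon>^2 * card A)"
      unfolding Set_def T_def by (rule bnd_s[OF P1 finA assms(5) Aless sd assms(2)])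
  qed
  also have "\<dots> = 9 * card T / (\<epsilon>^2 * card A) * real (\<Sum>s\<in>S. 2^s)"
    by (simp add: sum_distrib_left)
  also have "\<dots> \<le> 9 * card T / (\<epsilon>^2 * card A) * (2 * 2^16 * card A / real (b_param \<epsilon>))"
  proof (rule mult_left_mono)
    have bpos: "real (b_param \<epsilon>) > 0" unfolding b_param_def by simp
    have "b_param \<epsilon> * (\<Sum>s\<in>S. 2^s) \<le> 2 * (2^16 * card A)"
      by (rule sumS[OF Sfin]) (auto simp: S_def)
    hence "real (b_param \<epsilon>) * real (\<Sum>s\<in>S. 2^s) \<le> 2 * 2^16 * card A"
      by (metis (mono_tags) of_nat_le_iff of_nat_mult of_nat_numeral of_nat_power mult.assoc)
    thus "real (\<Sum>s\<in>S. 2^s) \<le> 2 * 2^16 * card A / real (b_param \<epsilon>)"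
      using bpos by (simp add: pos_le_divide_eq mult.commute)
  qed (use Apos in auto)
  also have "\<dots> = card T * (9 * 2^17 / (\<epsilon>^2 * real (b_param \<epsilon>)))"
    using Apos assms(2) by (simp add: field_simps)
  also have "\<dots> \<le> card T * (1 / 64)"
  proof (rule mult_left_mono)
    have pos: "\<epsilon>^2 * real (b_param \<epsilon>) > 0" using assms(2) unfolding b_param_def by simp
    show "9 * 2^17 / (\<epsilon>^2 * real (b_param \<epsilon>)) \<le> 1 / 64"
      using be pos by (simp add: divide_le_eq mult.commute)
  qed simp
  finally have "real (card {as\<in>T. Bad (\<Phi> as)}) / card T \<le> 1/64"
    using Tne Tfin by (simp add: divide_le_eq card_gt_0_iff)
  moreover have "(2::real) powi (-6) = 1/64" using powi_neg_nat[of 6] by simp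
  ultimately show ?thesis using red by simp
qed

end
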